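(* Let $n\in\mathbb{N}$ and let $a=(\alpha_1,\dots,\alpha_n)$, $b=(\beta_1,\dots,\beta_n)\in\mathbb{R}^n$. Let $\mathcal{V}_a$ and $\mathcal{V}_b$ denote the convex hulls of the sets of all coordinate permutations of $a$ and of $b$, respectively, i.e. $\mathcal{V}_a=\mathrm{conv}\{(\alpha_{\pi(1)},\dots,\alpha_{\pi(n)}):\pi\in S_n\}$ and similarly for $b$. Then $\mathcal{V}_a\cap\mathcal{V}_b=\emptyset$ if and only if $\sum_{k=1}^n\alpha_k\neq\sum_{k=1}^n\beta_k$.
   Context: $S_n$ denotes the symmetric group on $\{1,\dots,n\}$. *)

theory Defs
  imports "HOL-Analysis.Analysis"
begin

end

theory Submission
  imports Defs
begin

lemma centroid_in_hull:
  fixes a :: "real ^ 'n"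
  shows "(\<chi> i. (\<Sum>k\<in>UNIV. a $ k) / real CARD('n)) \<in>
         convex hull {(\<chi> i. a $ \<pi> i) | \<pi>. \<pi> permutes (UNIV :: 'n set)}"
proof -
  define P where "P = {p. p permutes (UNIV :: 'n set)}"
  define N where "N = card P"
  have finP: "finite P" unfolding P_def by (simp add: finite_permutations)
  have idP: "id \<in> P" unfolding P_def by simp
  have Npos: "N > 0" unfolding N_def using finP idP card_gt_0_iff by blast
  define S where "S i = (\<Sum>p\<in>P. a $ (p i))" for i
  have Seq: "S i = S j" for i j
  proof -
    have q: "Transposition.transpose i j permutes (UNIV :: 'n set)"
      by (simp add: permutes_swap_id)
    have "S i = (\<Sum>p\<in>P. a $ ((p \<circ> Transposition.transpose i j) i))"
      unfolding S_def P_def by (rule sum_permutations_compose_right[OF q])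
    also have "\<dots> = S j" unfolding S_def by simp
    finally show ?thesis .
  qed
  have inner: "(\<Sum>i\<in>UNIV. a $ (p i)) = (\<Sum>k\<in>UNIV. a $ k)" if "p \<in> P" for p
  proof -
    have pp: "p permutes (UNIV :: 'n set)" using that P_def by simp
    have "(\<Sum>k\<in>UNIV. a $ k) = (\<Sum>k\<in>p ` UNIV. a $ k)" using permutes_image[OF pp] by simp
    also have "\<dots> = (\<Sum>i\<in>UNIV. a $ (p i))"
      using sum.reindex[OF permutes_inj[OF pp]] by simp
    finally show ?thesis by simp
  qed
  have "(\<Sum>i\<in>UNIV. S i) = (\<Sum>p\<in>P. \<Sum>i\<in>UNIV. a $ (p i))"
    unfolding S_def by (rule sum.swap)
  also have "\<dots> = (\<Sum>p\<in>P. (\<Sum>k\<in>UNIV. a $ k))" using inner by simp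
  also have "\<dots> = real N * (\<Sum>k\<in>UNIV. a $ k)" unfolding N_def by simp
  finally have tot: "(\<Sum>i\<in>UNIV. S i) = real N * (\<Sum>k\<in>UNIV. a $ k)" .
  have Si: "S i = real N * (\<Sum>k\<in>UNIV. a $ k) / real CARD('n)" for i
  proof -
    have "(\<Sum>i'\<in>UNIV. S i') = real CARD('n) * S i" proof -
      have "(\<Sum>i'\<in>UNIV. S i') = (\<Sum>i'\<in>(UNIV::'n set). S i)" by (intro sum.cong refl Seq)
      then show ?thesis by simp
    qed
    with tot show ?thesis by (simp add: field_simps)
  qed
  have eq: "(\<chi> i. (\<Sum>k\<in>UNIV. a $ k) / real CARD('n)) =
            (\<Sum>p\<in>P. (1 / real N) *\<^sub>R (\<chi> i. a $ p i))"
  proof (rule vec_eq_iff[THEN iffD2], rule allI)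
    fix i
    have "(\<Sum>p\<in>P. (1 / real N) *\<^sub>R (\<chi> i. a $ p i)) $ i = (\<Sum>p\<in>P. (1 / real N) * a $ p i)"
      by (simp add: sum_component)
    also have "\<dots> = S i / real N" unfolding S_def by (simp add: sum_divide_distrib)
    also have "\<dots> = (\<Sum>k\<in>UNIV. a $ k) / real CARD('n)" using Si[of i] Npos by simp
    finally show "(\<chi> i. (\<Sum>k\<in>UNIV. a $ k) / real CARD('n)) $ i =
            (\<Sum>p\<in>P. (1 / real N) *\<^sub>R (\<chi> i. a $ p i)) $ i" by simp
  qed
  show ?thesis unfolding eq
  proof (rule convex_sum[OF finP convex_convex_hull])
    show "(\<Sum>p\<in>P. 1 / real N) = 1" using Npos idP unfolding N_def by auto
    show "\<And>p. p \<in> P \<Longrightarrow> 0 \<le> 1 / real N" by simp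
    show "\<And>p. p \<in> P \<Longrightarrow> (\<chi> i. a $ p i) \<in> convex hull {(\<chi> i. a $ \<pi> i) | \<pi>. \<pi> permutes (UNIV :: 'n set)}"
      unfolding P_def by (rule hull_inc) blast
  qed
qed

lemma hull_in_plane:
  fixes a :: "real ^ 'n"
  assumes "x \<in> convex hull {(\<chi> i. a $ \<pi> i) | \<pi>. \<pi> permutes (UNIV :: 'n set)}"
  shows "(\<Sum>k\<in>UNIV. x $ k) = (\<Sum>k\<in>UNIV. a $ k)"
proof -
  define H where "H = {y :: real ^ 'n. (\<Sum>k\<in>UNIV. y $ k) = (\<Sum>k\<in>UNIV. a $ k)}"
  have cH: "convex H" unfolding H_def convex_def
  proof (intro ballI allI impI)
    fix x y :: "real ^ 'n" and u v :: real
    assume x: "x \<in> {y. (\<Sum>k\<in>UNIV. y $ k) = (\<Sum>k\<in>UNIV. a $ k)}"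
      and y: "y \<in> {y. (\<Sum>k\<in>UNIV. y $ k) = (\<Sum>k\<in>UNIV. a $ k)}" and "0 \<le> u" "0 \<le> v" and uv: "u + v = 1"
    have "(\<Sum>k\<in>UNIV. (u *\<^sub>R x + v *\<^sub>R y) $ k) = u * (\<Sum>k\<in>UNIV. x $ k) + v * (\<Sum>k\<in>UNIV. y $ k)"
      by (simp add: sum.distrib sum_distrib_left)
    also have "\<dots> = (u + v) * (\<Sum>k\<in>UNIV. a $ k)" using x y by (simp add: distrib_right)
    finally show "u *\<^sub>R x + v *\<^sub>R y \<in> {y. (\<Sum>k\<in>UNIV. y $ k) = (\<Sum>k\<in>UNIV. a $ k)}"
      using uv by simp
  qed
  have sub: "{(\<chi> i. a $ \<pi> i) | \<pi>. \<pi> permutes (UNIV :: 'n set)} \<subseteq> H"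
  proof
    fix y assume "y \<in> {(\<chi> i. a $ \<pi> i) | \<pi>. \<pi> permutes (UNIV :: 'n set)}"
    then obtain p where pp: "p permutes (UNIV :: 'n set)" and y: "y = (\<chi> i. a $ p i)" by blast
    have "(\<Sum>k\<in>UNIV. a $ k) = (\<Sum>k\<in>p ` UNIV. a $ k)" using permutes_image[OF pp] by simp
    also have "\<dots> = (\<Sum>i\<in>UNIV. a $ (p i))"
      using sum.reindex[OF permutes_inj[OF pp]] by simp
    finally show "y \<in> H" unfolding H_def y by simp
  qed
  have "convex hull {(\<chi> i. a $ \<pi> i) | \<pi>. \<pi> permutes (UNIV :: 'n set)} \<subseteq> H"
    by (intro hull_minimal sub cH)
  with assms show ?thesis unfolding H_def by blast
qed

theorem proposition1:
  fixes a b :: "real ^ 'n"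
  shows "(convex hull {(\<chi> i. a $ \<pi> i) | \<pi>. \<pi> permutes (UNIV :: 'n set)})
           \<inter> (convex hull {(\<chi> i. b $ \<pi> i) | \<pi>. \<pi> permutes (UNIV :: 'n set)}) = {}
         \<longleftrightarrow> (\<Sum>k\<in>UNIV. a $ k) \<noteq> (\<Sum>k\<in>UNIV. b $ k)"
proof
  assume d: "(convex hull {(\<chi> i. a $ \<pi> i) | \<pi>. \<pi> permutes (UNIV :: 'n set)})
           \<inter> (convex hull {(\<chi> i. b $ \<pi> i) | \<pi>. \<pi> permutes (UNIV :: 'n set)}) = {}"
  show "(\<Sum>k\<in>UNIV. a $ k) \<noteq> (\<Sum>k\<in>UNIV. b $ k)"
  proof
    assume e: "(\<Sum>k\<in>UNIV. a $ k) = (\<Sum>k\<in>UNIV. b $ k)"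
    show False using centroid_in_hull[of a] centroid_in_hull[of b] d unfolding e by blast
  qed
next
  assume "(\<Sum>k\<in>UNIV. a $ k) \<noteq> (\<Sum>k\<in>UNIV. b $ k)"
  then show "(convex hull {(\<chi> i. a $ \<pi> i) | \<pi>. \<pi> permutes (UNIV :: 'n set)})
           \<inter> (convex hull {(\<chi> i. b $ \<pi> i) | \<pi>. \<pi> permutes (UNIV :: 'n set)}) = {}"
    using hull_in_plane[of _ a] hull_in_plane[of _ b] by fastforce
qed

end
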